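(* Let $\eta > 0$. There is $\alpha_0(\eta)>0$ such that the following holds for every sufficiently large integer $X$ and every $\alpha$ with $\exp(-(\log X)^{3/4 - \eta}) \le \alpha \le \alpha_0(\eta)$: there is a function $f : \{1,\dots,X\} \to [0,1]$ such that (1) $\mathbb{E}_{x \in \{1,\dots,X\}} f(x)= \alpha$; (2) the sum of $f(x) f(y)$ over all $x, y \in \{1,\dots,X\}$ with $x - y$ a perfect square is at most $\frac{1}{100} \alpha^2 X^{3/2}$; (3) the length $X'$ of the longest arithmetic subprogression of $\{1,\dots,X\}$ on which the average of $f$ is at least $2\alpha$ satisfies $X' < X \exp (-(\log (1/\alpha))^{1/3})$. *)

theory Defs
  imports Complex_Main
begin

definition is_subprog :: "nat \<Rightarrow> nat \<Rightarrow> nat \<Rightarrow> nat \<Rightarrow> bool" where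
  "is_subprog X a d L \<longleftrightarrow> 1 \<le> a \<and> 1 \<le> d \<and> 1 \<le> L \<and> a + d * (L - 1) \<le> X"

definition prog_avg :: "(nat \<Rightarrow> real) \<Rightarrow> nat \<Rightarrow> nat \<Rightarrow> nat \<Rightarrow> real" where
  "prog_avg f a d L = (\<Sum>j<L. f (a + d * j)) / real L"

definition square_diff :: "nat \<Rightarrow> nat \<Rightarrow> bool" where
  "square_diff x y \<longleftrightarrow> (\<exists>n::nat. n \<ge> 1 \<and> x = y + n ^ 2)"

end

theory Submission
  imports Defs "HOL-Computational_Algebra.Primes" "HOL-Number_Theory.Cong"
begin



lemma suc_div_split:
  fixes n k :: nat assumes "k > 0"
  shows "Suc n div k = n div k + (if k dvd Suc n then 1 else 0)"
  using assms by (auto simp: div_Suc dvd_eq_mod_eq_0)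

lemma multiplicity_le_self:
  fixes p n :: nat assumes "prime p" "n > 0"
  shows "multiplicity p n < n"
proof -
  have "p ^ multiplicity p n dvd n" by (simp add: multiplicity_dvd)
  hence "p ^ multiplicity p n \<le> n" using assms(2) by (simp add: dvd_imp_le)
  moreover have "2 ^ multiplicity p n \<le> p ^ multiplicity p n"
    using prime_ge_2_nat[OF assms(1)] by (simp add: power_mono)
  moreover have "multiplicity p n < 2 ^ multiplicity p n" by simp
  ultimately show ?thesis by linarith
qed

lemma card_pow_dvd:
  fixes p m K :: nat assumes "prime p" "m > 0" "multiplicity p m \<le> K"
  shows "(\<Sum>i\<in>{1..K}. (if p ^ i dvd m then 1 else 0::nat)) = multiplicity p m"
proof -
  have "p \<noteq> 1" using assms(1) by auto
  hence iff: "\<And>n. (p ^ n dvd m) = (n \<le> multiplicity p m)"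
    using assms(2) power_dvd_iff_le_multiplicity[of m p] by simp
  have "(\<Sum>i\<in>{1..K}. (if p ^ i dvd m then 1 else 0::nat)) = (\<Sum>i\<in>{1..K}. (if i \<le> multiplicity p m then 1 else 0::nat))"
    using iff by (intro sum.cong) auto
  also have "\<dots> = (\<Sum>i\<in>{1..multiplicity p m}. 1)"
    using assms(3) by (intro sum.mono_neutral_cong_right) auto
  also have "\<dots> = multiplicity p m" by simp
  finally show ?thesis .
qed

lemma legendre:
  fixes p n :: nat assumes "prime p"
  shows "multiplicity p (fact n) = (\<Sum>i\<in>{1..n}. n div p ^ i)"
proof (induction n)
  case 0 then show ?case by simp
next
  case (Suc n)
  have p1: "p > 1" using assms prime_gt_1_nat by blast
  have "multiplicity p (fact (Suc n) :: nat) = multiplicity p (Suc n * fact n)" by simp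
  also have "\<dots> = multiplicity p (Suc n) + multiplicity p (fact n :: nat)"
    using assms by (intro prime_elem_multiplicity_mult_distrib) auto
  also have "multiplicity p (Suc n) = (\<Sum>i\<in>{1..n}. (if p ^ i dvd Suc n then 1 else 0::nat))"
    using card_pow_dvd[OF assms, of "Suc n" n] multiplicity_le_self[OF assms, of "Suc n"] by simp
  finally have e1: "multiplicity p (fact (Suc n) :: nat) = (\<Sum>i\<in>{1..n}. (if p ^ i dvd Suc n then 1 else 0::nat)) + (\<Sum>i\<in>{1..n}. n div p ^ i)"
    using Suc by simp
  have "Suc n < 2 ^ Suc n" by (rule less_exp)
  also have "(2::nat) ^ Suc n \<le> p ^ Suc n" using p1 by (intro power_mono) auto
  finally have "Suc n < p ^ Suc n" .
  hence z: "Suc n div p ^ Suc n = 0" by simp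
  have "(\<Sum>i\<in>{1..Suc n}. Suc n div p ^ i) = (\<Sum>i\<in>{1..n}. Suc n div p ^ i) + Suc n div p ^ Suc n"
    by simp
  also have "\<dots> = (\<Sum>i\<in>{1..n}. n div p ^ i + (if p ^ i dvd Suc n then 1 else 0))"
  proof -
    have "\<And>i. Suc n div p ^ i = n div p ^ i + (if p ^ i dvd Suc n then 1 else 0)"
      using p1 by (intro suc_div_split) simp
    thus ?thesis using z by simp
  qed
  also have "\<dots> = (\<Sum>i\<in>{1..n}. n div p ^ i) + (\<Sum>i\<in>{1..n}. (if p ^ i dvd Suc n then 1 else 0::nat))"
    by (simp add: sum.distrib)
  finally show ?case using e1 by simp
qed

lemma legendre_ext:
  fixes p n K :: nat assumes "prime p" "n \<le> K"
  shows "multiplicity p (fact n) = (\<Sum>i\<in>{1..K}. n div p ^ i)"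
proof -
  have p1: "p > 1" using assms prime_gt_1_nat by blast
  have "(\<Sum>i\<in>{1..K}. n div p ^ i) = (\<Sum>i\<in>{1..n}. n div p ^ i) + (\<Sum>i\<in>{n<..K}. n div p ^ i)"
    using assms(2) by (subst sum.union_disjoint[symmetric]) (auto intro: sum.cong)
  also have "(\<Sum>i\<in>{n<..K}. n div p ^ i) = 0"
  proof (intro sum.neutral ballI)
    fix i assume "i \<in> {n<..K}"
    hence "n < i" by simp
    moreover have "i < p ^ i"
    proof -
      have "i < 2 ^ i" by (rule less_exp)
      also have "(2::nat) ^ i \<le> p ^ i" using p1 by (intro power_mono) auto
      finally show ?thesis .
    qed
    ultimately show "n div p ^ i = 0" by simp
  qed
  finally show ?thesis using legendre[OF assms(1)] by simp
qed



lemma binom_mult: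
  fixes p m :: nat assumes "prime p"
  shows "multiplicity p ((2*m) choose m) = (\<Sum>i\<in>{1..2*m}. 2*m div p ^ i - 2 * (m div p ^ i))"
proof -
  have "fact (2*m) = (fact m * fact m * ((2*m) choose m) :: nat)"
    using binomial_fact_lemma[of m "2*m"] by (simp add: mult_2)
  hence "multiplicity p (fact (2*m) :: nat) = multiplicity p (fact m :: nat) + multiplicity p (fact m :: nat) + multiplicity p ((2*m) choose m)"
    using assms by (simp add: prime_elem_multiplicity_mult_distrib)
  moreover have "multiplicity p (fact (2*m) :: nat) = (\<Sum>i\<in>{1..2*m}. 2*m div p ^ i)"
    using legendre[OF assms] by simp
  moreover have "multiplicity p (fact m :: nat) = (\<Sum>i\<in>{1..2*m}. m div p ^ i)"
    using legendre_ext[OF assms, of m "2*m"] by simp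
  moreover have "(\<Sum>i\<in>{1..2*m}. 2*m div p ^ i) = (\<Sum>i\<in>{1..2*m}. 2*m div p ^ i - 2 * (m div p ^ i)) + 2 * (\<Sum>i\<in>{1..2*m}. m div p ^ i)"
  proof -
    have "\<And>i. 2 * (m div p ^ i) \<le> 2*m div p ^ i"
    proof -
      fix i
      have q: "p ^ i > 0" using assms prime_gt_0_nat by simp
      have "2 * (m div p ^ i) * p ^ i \<le> 2 * m"
      proof -
        have "m div p ^ i * p ^ i \<le> m" by simp
        thus ?thesis by (simp add: mult.assoc)
      qed
      hence "(2 * (m div p ^ i) * p ^ i) div p ^ i \<le> 2 * m div p ^ i" by (rule div_le_mono)
      thus "2 * (m div p ^ i) \<le> 2*m div p ^ i" using q by (metis nonzero_mult_div_cancel_right less_nat_zero_code neq0_conv)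
    qed
    hence "(\<Sum>i\<in>{1..2*m}. 2*m div p ^ i) = (\<Sum>i\<in>{1..2*m}. (2*m div p ^ i - 2 * (m div p ^ i)) + 2 * (m div p ^ i))"
      by (intro sum.cong) auto
    also have "\<dots> = (\<Sum>i\<in>{1..2*m}. 2*m div p ^ i - 2 * (m div p ^ i)) + 2 * (\<Sum>i\<in>{1..2*m}. m div p ^ i)"
      by (simp add: sum.distrib sum_distrib_left)
    finally show ?thesis .
  qed
  ultimately show ?thesis by linarith
qed

lemma binom_pow_le:
  fixes p m :: nat assumes "prime p" "m > 0"
  shows "p ^ multiplicity p ((2*m) choose m) \<le> 2*m"
proof (rule ccontr)
  define v where "v = multiplicity p ((2*m) choose m)"
  define t where "t i = 2*m div p ^ i - 2 * (m div p ^ i)" for i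
  assume "\<not> p ^ multiplicity p ((2*m) choose m) \<le> 2*m"
  hence big: "p ^ v > 2*m" unfolding v_def by simp
  have p1: "p > 1" using assms prime_gt_1_nat by blast
  have v0: "v \<ge> 1" using big assms(2) by (cases v) auto
  have t1: "t i \<le> 1" for i
  proof -
    have q: "p ^ i > 0" using p1 by simp
    have "2*m div p ^ i \<le> 2 * (m div p ^ i) + 1"
    proof -
      have "2*m = 2 * (m div p ^ i) * p ^ i + 2 * (m mod p ^ i)"
        using mult_div_mod_eq[of "p^i" m] by (metis add_mult_distrib2 mult.commute mult.assoc)
      moreover have "2 * (m mod p ^ i) < 2 * p ^ i" using q by simp
      ultimately have "2*m < (2 * (m div p ^ i) + 2) * p ^ i" by (simp add: algebra_simps)
      hence "2*m div p ^ i < 2 * (m div p ^ i) + 2" using q by (simp add: div_less_iff_less_mult)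
      thus ?thesis by simp
    qed
    thus ?thesis unfolding t_def by simp
  qed
  have t0: "t i = 0" if "i \<ge> v" for i
  proof -
    have "p ^ v \<le> p ^ i" using p1 that by (simp add: power_increasing)
    hence "2*m < p ^ i" using big by simp
    hence "m < p ^ i" by simp
    thus ?thesis unfolding t_def using \<open>2*m < p ^ i\<close> by simp
  qed
  have "v = (\<Sum>i\<in>{1..2*m}. t i)" unfolding v_def t_def using binom_mult[OF assms(1)] by simp
  also have "\<dots> \<le> (\<Sum>i\<in>{1..<v}. t i)"
  proof -
    have "(\<Sum>i\<in>{1..2*m}. t i) = (\<Sum>i\<in>{1..2*m} \<inter> {..<v}. t i)"
    proof (intro sum.mono_neutral_right)
      show "\<forall>i\<in>{1..2 * m} - {1..2 * m} \<inter> {..<v}. t i = 0" using t0 by (auto simp: not_less)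
    qed auto
    also have "\<dots> \<le> (\<Sum>i\<in>{1..<v}. t i)"
      by (intro sum_mono2) auto
    finally show ?thesis .
  qed
  also have "\<dots> \<le> (\<Sum>i\<in>{1..<v}. 1)" using t1 by (intro sum_mono) auto
  also have "\<dots> = v - 1" by simp
  finally show False using v0 by simp
qed

lemma binom_le_pi:
  fixes m :: nat assumes "m > 0"
  shows "(2*m) choose m \<le> (2*m) ^ card {p. prime p \<and> p \<le> 2*m}"
proof -
  define C where "C = (2*m) choose m"
  have C0: "C > 0" unfolding C_def by simp
  have sub: "prime_factors C \<subseteq> {p. prime p \<and> p \<le> 2*m}"
  proof
    fix p assume p: "p \<in> prime_factors C"
    hence pp: "prime p" by auto
    have "p dvd C" using p by auto
    moreover have "p \<noteq> 1" using pp by auto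
    ultimately have "multiplicity p C \<ge> 1" using C0 power_dvd_iff_le_multiplicity[of C p 1] by simp
    hence "p ^ 1 \<le> p ^ multiplicity p C" using pp prime_gt_0_nat[OF pp] by (intro power_increasing) auto
    also have "\<dots> \<le> 2*m" unfolding C_def using binom_pow_le[OF pp assms] .
    finally show "p \<in> {p. prime p \<and> p \<le> 2*m}" using pp by simp
  qed
  have fin: "finite {p::nat. prime p \<and> p \<le> 2*m}" by simp
  have "C = (\<Prod>p\<in>prime_factors C. p ^ multiplicity p C)" using prime_factorization_nat[OF C0] .
  also have "\<dots> \<le> (\<Prod>p\<in>prime_factors C. 2*m)"
  proof (intro prod_mono conjI)
    fix p assume "p \<in> prime_factors C"
    hence "prime p" by auto
    thus "p ^ multiplicity p C \<le> 2*m" unfolding C_def by (rule binom_pow_le[OF _ assms])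
  qed simp
  also have "\<dots> = (2*m) ^ card (prime_factors C)" by simp
  also have "\<dots> \<le> (2*m) ^ card {p. prime p \<and> p \<le> 2*m}"
  proof (rule power_increasing)
    show "card (prime_factors C) \<le> card {p. prime p \<and> p \<le> 2*m}" by (rule card_mono[OF fin sub])
  qed (use assms in simp)
  finally show ?thesis unfolding C_def .
qed

lemma cube_le_pow: "n \<ge> 12 \<Longrightarrow> 2 * n^3 \<le> (2::nat) ^ n"
proof (induction n rule: dec_induct)
  case base then show ?case by simp
next
  case (step n)
  have e: "(Suc n)^3 = n^3 + 3*n^2 + 3*n + 1" by (simp add: power3_eq_cube power2_eq_square algebra_simps)
  have c: "n^3 = n*n^2" by (simp add: power3_eq_cube power2_eq_square)
  have "12 * n^2 \<le> n * n^2" using step(1) by (intro mult_le_mono1) 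
  moreover have "1 \<le> n^2" using step(1) by simp
  moreover have "n \<le> n^2" using step(1) by (simp add: power2_eq_square)
  moreover have "\<And>a b. 12*b \<le> a \<Longrightarrow> 1 \<le> b \<Longrightarrow> n \<le> b \<Longrightarrow> 2*(a+3*b+3*n+1) \<le> 2*(2*(a::nat))" by arith
  ultimately have "2 * (Suc n)^3 \<le> 2 * (2 * n^3)" unfolding e c by blast
  also have "\<dots> \<le> 2 * 2 ^ n" using step by simp
  finally show ?case by simp
qed

lemma cheb:
  fixes N :: nat assumes N: "N \<ge> 12"
  shows "10 \<le> card {p. prime p \<and> N < p \<and> p \<le> 2*N^3}"
proof (rule ccontr)
  define m where "m = N^3"
  define Q where "Q = {p. prime p \<and> N < p \<and> p \<le> 2*N^3}"
  assume "\<not> 10 \<le> card {p. prime p \<and> N < p \<and> p \<le> 2*N^3}"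
  hence Qc: "card Q \<le> 9" unfolding Q_def by simp
  have m0: "m > 0" unfolding m_def using N by simp
  have "{p. prime p \<and> p \<le> 2*m} \<subseteq> {1..N} \<union> Q"
  proof
    fix p assume "p \<in> {p. prime p \<and> p \<le> 2*m}"
    hence p: "prime p" "p \<le> 2*m" by auto
    have "p \<ge> 1" using prime_gt_0_nat[OF p(1)] by simp
    show "p \<in> {1..N} \<union> Q"
    proof (cases "p \<le> N")
      case True thus ?thesis using \<open>p \<ge> 1\<close> by simp
    next
      case False thus ?thesis using p unfolding Q_def m_def by simp
    qed
  qed
  hence "card {p. prime p \<and> p \<le> 2*m} \<le> card ({1..N} \<union> Q)"
    by (intro card_mono) (auto simp: Q_def)
  also have "\<dots> \<le> card {1..N} + card Q" by (rule card_Un_le)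
  also have "\<dots> \<le> N + 9" using Qc by simp
  finally have pc: "card {p. prime p \<and> p \<le> 2*m} \<le> N + 9" .
  have "real (4^m) / (2 * real m) \<le> real ((2*m) choose m)"
    using central_binomial_lower_bound[OF m0] by simp
  hence "real (4^m) \<le> real ((2*m) choose m) * (2 * real m)"
    using m0 by (simp add: field_simps)
  hence "4^m \<le> ((2*m) choose m) * (2 * m)"
    by (metis of_nat_le_iff of_nat_mult of_nat_numeral)
  also have "\<dots> \<le> (2*m) ^ card {p. prime p \<and> p \<le> 2*m} * (2*m)"
    using binom_le_pi[OF m0] by simp
  also have "\<dots> \<le> (2*m) ^ (N+9) * (2*m)"
    using m0 pc by (intro mult_right_mono power_increasing) auto
  also have "\<dots> = (2*m) ^ (N+10)"
  proof -
    have "N + 10 = Suc (N+9)" by simp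
    then show ?thesis by (metis power_Suc2)
  qed
  also have "\<dots> \<le> (2^N) ^ (N+10)"
    unfolding m_def using cube_le_pow[OF N] by (intro power_mono) auto
  also have "\<dots> = 2 ^ (N*N + 10*N)" by (simp add: power_mult[symmetric] algebra_simps)
  finally have A: "(2::nat) ^ (2*N^3) \<le> 2 ^ (N*N + 10*N)"
    unfolding m_def by (simp add: power_mult)
  have "N*N + 10*N < 2*N^3"
  proof -
    have "12 * (N*N) \<le> N*(N*N)" using N by (intro mult_le_mono1)
    moreover have "N \<le> N*N" using N by simp
    moreover have "N^3 = N*(N*N)" by (simp add: power3_eq_cube)
    moreover have "\<And>a b. 12*b \<le> a \<Longrightarrow> N \<le> b \<Longrightarrow> 12 \<le> N \<Longrightarrow> b + 10*N < 2*(a::nat)" by arith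
    ultimately show ?thesis using N by metis
  qed
  hence "(2::nat) ^ (N*N + 10*N) < 2 ^ (2*N^3)" by (intro power_strict_increasing) auto
  with A show False by simp
qed



lemma nonsq:
  fixes p :: nat assumes "prime p" "p > 2"
  shows "\<exists>r. \<forall>n. \<not> [n^2 = r] (mod p)"
proof -
  define f where "f n = n^2 mod p" for n
  have p0: "p > 0" using assms by simp
  have "f 1 = f (p - 1)"
  proof -
    obtain q where q: "p = Suc q" using p0 by (cases p) auto
    have "(p - 1)^2 + 2*p = p*p + 1" unfolding q by (simp add: power2_eq_square algebra_simps)
    hence "(p - 1)^2 mod p = (1 + p*p) mod p" by (metis add.commute mod_mult_self1)
    also have "\<dots> = 1 mod p" by (rule mod_mult_self1)
    finally show ?thesis unfolding f_def by simp
  qed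
  moreover have "1 \<noteq> p - 1" "1 < p" "p - 1 < p" using assms by auto
  ultimately have ni: "\<not> inj_on f {..<p}" unfolding inj_on_def by blast
  have "card (f ` {..<p}) \<noteq> card {..<p}" using ni inj_on_iff_eq_card[of "{..<p}" f] by auto
  moreover have "f ` {..<p} \<subseteq> {..<p}" unfolding f_def using p0 by auto
  ultimately have "f ` {..<p} \<noteq> {..<p}" by auto
  with \<open>f ` {..<p} \<subseteq> {..<p}\<close> obtain r where r: "r < p" "r \<notin> f ` {..<p}" by auto
  have "\<not> [n^2 = r] (mod p)" for n
  proof
    assume "[n^2 = r] (mod p)"
    hence "n^2 mod p = r" using r(1) by (simp add: cong_def)
    moreover have "n^2 mod p = f (n mod p)" unfolding f_def by (simp add: power_mod)
    moreover have "n mod p < p" using p0 by simp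
    ultimately show False using r(2) by (metis image_eqI lessThan_iff)
  qed
  thus ?thesis by blast
qed

lemma nonsq_mult:
  fixes p R :: nat assumes "prime p" "p > 2" "coprime R p"
  shows "\<exists>u. \<forall>n. \<not> [n^2 = R*u] (mod p)"
proof -
  obtain r where r: "\<forall>n. \<not> [n^2 = r] (mod p)" using nonsq[OF assms(1,2)] by blast
  obtain x where x: "[R * x = Suc 0] (mod p)" using cong_solve_coprime_nat[OF assms(3)] by blast
  have "[R * (x * r) = r] (mod p)"
    using cong_mult[OF x cong_refl[of r]] by (simp add: mult.assoc)
  hence "\<forall>n. \<not> [n^2 = R*(x*r)] (mod p)" using r cong_trans by blast
  thus ?thesis by blast
qed

lemma prod_primes_dvd:
  fixes P :: "nat set"
  assumes "finite P" "\<forall>p\<in>P. prime p" "\<forall>p\<in>P. p dvd n"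
  shows "\<Prod>P dvd n"
  using assms
proof (induction P rule: finite_induct)
  case empty then show ?case by simp
next
  case (insert p P)
  have "coprime p (\<Prod>P)"
    using insert by (intro prod_coprime_right primes_coprime) auto
  thus ?case using insert by (simp add: divides_mult)
qed



lemma dvd_Prod_self:
  fixes P :: "nat set" assumes "finite P" "p \<in> P" shows "p dvd \<Prod>P"
  using assms by (simp add: prod.remove)

lemma construct:
  fixes N :: nat assumes N: "N \<ge> 12"
  shows "\<exists>M A. 0 < M \<and> M \<le> (2*N^3)^10 \<and> A \<subseteq> {..<M} \<and> card A = 252 \<and>
     (\<forall>d. 1 \<le> d \<and> d \<le> N \<longrightarrow> coprime d M) \<and>
     (\<forall>x y n. x mod M \<in> A \<longrightarrow> y mod M \<in> A \<longrightarrow> x = y + n^2 \<longrightarrow> M dvd n)"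
proof -
  obtain P where P: "P \<subseteq> {p. prime p \<and> N < p \<and> p \<le> 2*N^3}" "card P = 10" "finite P"
    by (rule obtain_subset_with_card_n[OF cheb[OF N]])
  have Pp: "\<And>p. p \<in> P \<Longrightarrow> prime p" and Pg: "\<And>p. p \<in> P \<Longrightarrow> N < p"
    and Pl: "\<And>p. p \<in> P \<Longrightarrow> p \<le> 2*N^3" using P(1) by auto
  define M where "M = \<Prod>P"
  have M0: "M > 0" unfolding M_def using Pp prime_gt_0_nat by (simp add: P(3))
  have Mle: "M \<le> (2*N^3)^10"
  proof -
    have "M \<le> (\<Prod>p\<in>P. 2*N^3)" unfolding M_def using Pl by (intro prod_mono) auto
    thus ?thesis using P(2) by simp
  qed
  have "\<forall>p\<in>P. \<exists>e. (\<forall>q\<in>P. q \<noteq> p \<longrightarrow> q dvd e) \<and> (\<forall>n. \<not> [n^2 = e] (mod p))"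
  proof
    fix p assume p: "p \<in> P"
    have cp: "coprime (\<Prod>(P - {p})) p"
      using p Pp by (intro prod_coprime_left primes_coprime) auto
    have "p > 2" using Pg[OF p] N by simp
    then obtain u where u: "\<forall>n. \<not> [n^2 = \<Prod>(P - {p}) * u] (mod p)"
      using nonsq_mult[OF Pp[OF p] _ cp] by blast
    have "\<forall>q\<in>P. q \<noteq> p \<longrightarrow> q dvd \<Prod>(P - {p}) * u"
      using P(3) by (auto intro!: dvd_mult2 dvd_prodI)
    with u show "\<exists>e. (\<forall>q\<in>P. q \<noteq> p \<longrightarrow> q dvd e) \<and> (\<forall>n. \<not> [n^2 = e] (mod p))" by blast
  qed
  from bchoice[OF this] obtain E where E: "\<forall>p\<in>P. (\<forall>q\<in>P. q \<noteq> p \<longrightarrow> q dvd E p) \<and> (\<forall>n. \<not> [n^2 = E p] (mod p))"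
    by blast
  have E1: "\<And>p q. p \<in> P \<Longrightarrow> q \<in> P \<Longrightarrow> q \<noteq> p \<Longrightarrow> q dvd E p" using E by blast
  have E2: "\<And>p n. p \<in> P \<Longrightarrow> \<not> [n^2 = E p] (mod p)" using E by blast
  define a where "a I = (\<Sum>p\<in>I. E p)" for I
  define F where "F = {I. I \<subseteq> P \<and> card I = 5}"
  have key: "I = J" if IJ: "I \<in> F" "J \<in> F" and c: "[a J = a I + n^2] (mod M)" for I J n
  proof (rule ccontr)
    assume "I \<noteq> J"
    have fI: "finite I" "finite J" using IJ P(3) unfolding F_def by (auto intro: finite_subset)
    have "\<not> J \<subseteq> I"
    proof
      assume "J \<subseteq> I"
      moreover have "card J = card I" using IJ unfolding F_def by simp
      ultimately have "J = I" using fI by (intro card_subset_eq) auto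
      with \<open>I \<noteq> J\<close> show False by simp
    qed
    then obtain p where p: "p \<in> J" "p \<notin> I" by blast
    have pP: "p \<in> P" using p IJ unfolding F_def by auto
    have "p dvd M" unfolding M_def using pP P(3) by (simp add: dvd_Prod_self)
    hence c': "[a J = a I + n^2] (mod p)" using c cong_dvd_modulus_nat by blast
    have "p dvd a I" unfolding a_def
      using IJ p(2) E1 pP unfolding F_def by (intro dvd_sum) auto
    hence aI: "[a I = 0] (mod p)" by (simp add: cong_0_iff)
    have "a J = E p + (\<Sum>q\<in>J - {p}. E q)" unfolding a_def using fI p(1) by (simp add: sum.remove)
    moreover have "p dvd (\<Sum>q\<in>J - {p}. E q)"
      using IJ E1 pP unfolding F_def by (intro dvd_sum) auto
    hence "[E p + (\<Sum>q\<in>J - {p}. E q) = E p + 0] (mod p)"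
      by (intro cong_add cong_refl) (simp add: cong_0_iff)
    ultimately have aJ: "[a J = E p] (mod p)" by simp
    have "[E p = 0 + n^2] (mod p)"
      using cong_sym[OF aJ] c' cong_add[OF aI cong_refl[of "n^2"]] cong_trans by blast
    hence "[n^2 = E p] (mod p)" by (simp add: cong_sym)
    with E2[OF pP] show False by blast
  qed
  define A where "A = (\<lambda>I. a I mod M) ` F"
  have inj: "inj_on (\<lambda>I. a I mod M) F"
  proof (rule inj_onI)
    fix I J assume "I \<in> F" "J \<in> F" "a I mod M = a J mod M"
    hence "[a J = a I + 0^2] (mod M)" by (simp add: cong_def)
    thus "I = J" using key[OF \<open>I \<in> F\<close> \<open>J \<in> F\<close>] by blast
  qed
  have cardA: "card A = 252"
  proof -
    have "card A = card F" unfolding A_def using inj by (simp add: card_image)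
    also have "\<dots> = 10 choose 5" unfolding F_def using n_subsets[OF P(3), of 5] P(2) by simp
    also have "\<dots> = 252" by (simp add: numeral_eq_Suc)
    finally show ?thesis .
  qed
  have Asub: "A \<subseteq> {..<M}" unfolding A_def using M0 by auto
  have cop: "coprime d M" if "1 \<le> d" "d \<le> N" for d
  proof -
    have "coprime M d" unfolding M_def
    proof (intro prod_coprime_left prime_imp_coprime)
      fix p assume "p \<in> P"
      thus "prime p" using Pp by blast
      have "d < p" using Pg[OF \<open>p \<in> P\<close>] that by simp
      thus "\<not> p dvd d" using that by (auto dest: dvd_imp_le)
    qed
    thus ?thesis by (simp add: coprime_commute)
  qed
  have sq: "M dvd n" if xA: "x mod M \<in> A" and yA: "y mod M \<in> A" and xy: "x = y + n^2" for x y n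
  proof -
    obtain J where J: "J \<in> F" "x mod M = a J mod M" using xA unfolding A_def image_iff by blast
    obtain I where I: "I \<in> F" "y mod M = a I mod M" using yA unfolding A_def image_iff by blast
    have "[a J = a I + n^2] (mod M)"
    proof -
      have "[a J = x] (mod M)" using J(2) by (simp add: cong_def)
      moreover have "[x = y + n^2] (mod M)" using xy by simp
      moreover have "[y + n^2 = a I + n^2] (mod M)" using I(2) by (intro cong_add) (auto simp: cong_def)
      ultimately show ?thesis using cong_trans by blast
    qed
    hence "I = J" using key[OF I(1) J(1)] by blast
    hence "[y + n^2 = y + 0] (mod M)" using I J xy by (simp add: cong_def)
    hence "[n^2 = 0] (mod M)" using cong_add_lcancel_nat by blast
    hence dM: "M dvd n^2" by (simp add: cong_0_iff)
    have "\<forall>p\<in>P. p dvd n"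
    proof
      fix p assume "p \<in> P"
      hence "p dvd n^2" using dM unfolding M_def using dvd_Prod_self[OF P(3)] dvd_trans by blast
      thus "p dvd n" using Pp[OF \<open>p \<in> P\<close>] prime_dvd_power by blast
    qed
    thus ?thesis unfolding M_def using prod_primes_dvd[OF P(3)] Pp by blast
  qed
  show ?thesis using M0 Mle Asub cardA cop sq by blast
qed



lemma sum_if_const:
  fixes t :: real assumes "finite B"
  shows "(\<Sum>x\<in>B. if P x then t else 0) = t * real (card {x\<in>B. P x})"
proof -
  have "(\<Sum>x\<in>{x\<in>B. P x}. t) = (\<Sum>x\<in>B. if P x then t else 0)"
    by (rule sum.inter_filter[OF assms])
  hence "(\<Sum>x\<in>B. if P x then t else 0) = (\<Sum>x\<in>{x\<in>B. P x}. t)" by simp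
  thus ?thesis by simp
qed

lemma ap_count:
  fixes M d a L :: nat and A :: "nat set"
  assumes M0: "M > 0" and cop: "coprime d M" and A: "A \<subseteq> {..<M}"
  shows "card {j\<in>{..<L}. (a + d*j) mod M \<in> A} \<le> card A * (L div M + 1)"
proof -
  define h where "h j = ((a + d*j) mod M, j div M)" for j
  have fA: "finite A" using A finite_subset by blast
  have "inj_on h {j\<in>{..<L}. (a + d*j) mod M \<in> A}"
  proof (rule inj_onI)
    fix j j' assume "j \<in> {j\<in>{..<L}. (a + d*j) mod M \<in> A}" "j' \<in> {j\<in>{..<L}. (a + d*j) mod M \<in> A}" "h j = h j'"
    hence e1: "(a + d*j) mod M = (a + d*j') mod M" and e2: "j div M = j' div M" unfolding h_def by auto
    from e1 have "[a + d*j = a + d*j'] (mod M)" by (simp add: cong_def)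
    hence "[d*j = d*j'] (mod M)" by (simp add: cong_add_lcancel_nat)
    hence "[j = j'] (mod M)" using cop by (simp add: cong_mult_lcancel_nat)
    hence "j mod M = j' mod M" by (simp add: cong_def)
    with e2 show "j = j'" by (metis div_mult_mod_eq)
  qed
  hence "card {j\<in>{..<L}. (a + d*j) mod M \<in> A} = card (h ` {j\<in>{..<L}. (a + d*j) mod M \<in> A})"
    by (simp add: card_image)
  also have "\<dots> \<le> card (A \<times> {..L div M})"
  proof (rule card_mono)
    show "finite (A \<times> {..L div M})" using fA by simp
    show "h ` {j\<in>{..<L}. (a + d*j) mod M \<in> A} \<subseteq> A \<times> {..L div M}"
      unfolding h_def by (auto intro: div_le_mono)
  qed
  also have "\<dots> = card A * (L div M + 1)" by (simp add: card_cartesian_product)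
  finally show ?thesis .
qed

lemma mod_helper: "b < M \<Longrightarrow> (b + M*k) mod M = (b::nat)"
  by simp

lemma div_helper: "b < M \<Longrightarrow> (b + M*k) div M = (k::nat)"
  by simp

lemma S_count:
  fixes M X :: nat and A :: "nat set"
  assumes M0: "M > 0" and A: "A \<subseteq> {..<M}"
  shows "card A * (X div M - 1) \<le> card {x\<in>{1..X}. x mod M \<in> A}"
proof -
  define g where "g p = fst p + M * (snd p + 1)" for p
  have fA: "finite A" using A finite_subset by blast
  have inj: "inj_on g (A \<times> {..<X div M - 1})"
  proof (rule inj_onI)
    fix p q assume p: "p \<in> A \<times> {..<X div M - 1}" and q: "q \<in> A \<times> {..<X div M - 1}" and e: "g p = g q"
    have pl: "fst p < M" "fst q < M" using p q A by auto
    have "g p mod M = fst p" "g q mod M = fst q" unfolding g_def using pl by (simp_all only: mod_helper)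
    hence f: "fst p = fst q" using e by simp
    have "g p div M = snd p + 1" "g q div M = snd q + 1" unfolding g_def using pl by (simp_all only: div_helper)
    hence "snd p = snd q" using e by simp
    with f show "p = q" by (simp add: prod_eq_iff)
  qed
  have sub: "g ` (A \<times> {..<X div M - 1}) \<subseteq> {x\<in>{1..X}. x mod M \<in> A}"
  proof
    fix x assume "x \<in> g ` (A \<times> {..<X div M - 1})"
    then obtain b q where bq: "b \<in> A" "q < X div M - 1" "x = b + M * (q + 1)" unfolding g_def by auto
    have bM: "b < M" using bq(1) A by auto
    have "x mod M = b" using bq(3) bM by (simp only: mod_helper)
    moreover have "x \<ge> 1" using bq(3) M0 by simp
    moreover have "x \<le> X"
    proof -
      have "q + 2 \<le> X div M" using bq(2) by simp
      hence "M * (q + 2) \<le> M * (X div M)" by (rule mult_le_mono2)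
      also have "\<dots> \<le> X" by simp
      finally have "M * (q + 2) \<le> X" .
      thus ?thesis using bq(3) bM by (simp add: algebra_simps)
    qed
    ultimately show "x \<in> {x\<in>{1..X}. x mod M \<in> A}" using bq(1) by simp
  qed
  have "card A * (X div M - 1) = card (A \<times> {..<X div M - 1})" by (simp add: card_cartesian_product)
  also have "\<dots> = card (g ` (A \<times> {..<X div M - 1}))" using inj by (simp add: card_image)
  also have "\<dots> \<le> card {x\<in>{1..X}. x mod M \<in> A}" by (intro card_mono sub) simp
  finally show ?thesis .
qed



lemma sq_count:
  fixes M X :: nat and A :: "nat set"
  assumes M0: "M > 0"
    and sq: "\<forall>x y n. x mod M \<in> A \<longrightarrow> y mod M \<in> A \<longrightarrow> x = y + n^2 \<longrightarrow> M dvd n"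
  shows "card {p\<in>{1..X} \<times> {1..X}. square_diff (fst p) (snd p) \<and> fst p mod M \<in> A \<and> snd p mod M \<in> A}
         \<le> card {x\<in>{1..X}. x mod M \<in> A} * nat \<lfloor>sqrt (real X) / real M\<rfloor>"
proof -
  define T where "T = {p\<in>{1..X} \<times> {1..X}. square_diff (fst p) (snd p) \<and> fst p mod M \<in> A \<and> snd p mod M \<in> A}"
  define S where "S = {x\<in>{1..X}. x mod M \<in> A}"
  define K where "K = nat \<lfloor>sqrt (real X) / real M\<rfloor>"
  define Q where "Q = (\<lambda>m. (M*m)^2) ` {1..K}"
  define h where "h p = (snd p, fst p - snd p)" for p :: "nat \<times> nat"
  have inj: "inj_on h T"
  proof (rule inj_onI)
    fix p q assume p: "p \<in> T" and q: "q \<in> T" and e: "h p = h q"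
    have "fst p \<ge> snd p" "fst q \<ge> snd q" using p q unfolding T_def square_diff_def by auto
    with e show "p = q" unfolding h_def by (simp add: prod_eq_iff) linarith
  qed
  have sub: "h ` T \<subseteq> S \<times> Q"
  proof
    fix z assume "z \<in> h ` T"
    then obtain x y where xy: "(x, y) \<in> T" "z = (y, x - y)" unfolding h_def by auto
    from xy(1) obtain n where n: "n \<ge> 1" "x = y + n^2" unfolding T_def square_diff_def by auto
    have xX: "x \<le> X" and xA: "x mod M \<in> A" and yA: "y mod M \<in> A" and y1: "y \<in> {1..X}"
      using xy(1) unfolding T_def by auto
    have "M dvd n" using sq xA yA n(2) by blast
    then obtain m where m: "n = M * m" by blast
    have m1: "m \<ge> 1" using n(1) m by (cases m) auto
    have "(M*m)^2 \<le> X" using xX n(2) m by simp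
    hence "real ((M*m)^2) \<le> real X" by (simp only: of_nat_le_iff)
    hence "(real M * real m)^2 \<le> real X" by simp
    hence "real M * real m \<le> sqrt (real X)" using real_le_rsqrt by blast
    hence "real m \<le> sqrt (real X) / real M" using M0 by (simp add: field_simps)
    hence "m \<le> K" unfolding K_def by linarith
    hence "x - y \<in> Q" unfolding Q_def using m1 n(2) m by auto
    moreover have "y \<in> S" unfolding S_def using y1 yA by simp
    ultimately show "z \<in> S \<times> Q" using xy(2) by simp
  qed
  have "card T = card (h ` T)" using inj by (simp add: card_image)
  also have "\<dots> \<le> card (S \<times> Q)" by (intro card_mono sub) (simp add: S_def Q_def)
  also have "\<dots> = card S * card Q" by (simp add: card_cartesian_product)
  also have "\<dots> \<le> card S * K"
  proof -
    have "card Q \<le> card {1..K}" unfolding Q_def by (rule card_image_le) simp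
    thus ?thesis by simp
  qed
  finally show ?thesis unfolding T_def S_def K_def .
qed



lemma cube_root_facts:
  fixes l :: real assumes "l > 0"
  shows "(l powr (1/3))^3 = l"
proof -
  have "(l powr (1/3))^3 = l powr (of_nat 3 * (1/3))" using assms by (simp add: powr_power)
  also have "\<dots> = l" using assms by simp
  finally show ?thesis .
qed

lemma ten_le_cube:
  fixes s :: real assumes "s \<ge> 0" "s^3 \<ge> 1000" shows "s \<ge> 10"
proof (rule ccontr)
  assume "\<not> s \<ge> 10"
  hence "s^3 < 10^3" using assms(1) by (intro power_strict_mono) auto
  thus False using assms(2) by simp
qed

lemma cube_ge: fixes s :: real assumes "s \<ge> 10" shows "s^3 \<ge> 100 * s"
proof -
  have "s * s \<ge> 10 * 10" using assms by (intro mult_mono) auto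
  hence "s * (s * s) \<ge> s * 100" using assms by (intro mult_left_mono) auto
  thus ?thesis by (simp add: power3_eq_cube algebra_simps)
qed

lemma two_pow_le_exp: "(2::real) ^ n \<le> exp (real n)"
proof -
  have "(2::real) \<le> exp 1" using exp_ge_add_one_self[of 1] by simp
  hence "(2::real) ^ n \<le> exp 1 ^ n" by (intro power_mono) auto
  also have "\<dots> = exp (real n * 1)" by (rule exp_of_nat_mult[symmetric])
  finally show ?thesis by simp
qed

lemma params:
  fixes X :: nat and \<alpha> \<eta> :: real
  assumes eta: "\<eta> > 0" and X: "real X \<ge> exp 1000"
    and lo: "exp (- ((ln (real X)) powr (3/4 - \<eta>))) \<le> \<alpha>" and hi: "\<alpha> \<le> exp (-1000)"
  shows "\<alpha> > 0 \<and> ln (1/\<alpha>) powr (1/3) \<ge> 10 \<and> \<alpha> * exp (130 + 30 * ln (1/\<alpha>) powr (1/3)) \<le> 1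
         \<and> exp (135 + 31 * ln (1/\<alpha>) powr (1/3)) < real X"
proof -
  define l where "l = ln (1/\<alpha>)"
  define s where "s = l powr (1/3)"
  have a0: "\<alpha> > 0" using lo by (metis exp_gt_zero order_less_le_trans)
  have X0: "real X > 0" using X by (metis exp_gt_zero order_less_le_trans)
  have lX: "ln (real X) \<ge> 1000" using X X0 by (metis ln_exp ln_le_cancel_iff exp_gt_zero)
  have l_eq: "l = - ln \<alpha>" unfolding l_def using a0 by (simp add: ln_div)
  have l1000: "l \<ge> 1000"
  proof -
    have "ln \<alpha> \<le> ln (exp (-1000))" using hi a0 by (subst ln_le_cancel_iff) auto
    thus ?thesis using l_eq by simp
  qed
  have lle: "l \<le> ln (real X)"
  proof -
    have "ln (exp (- ((ln (real X)) powr (3/4 - \<eta>)))) \<le> ln \<alpha>"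
      using lo a0 by (subst ln_le_cancel_iff) auto
    hence "l \<le> (ln (real X)) powr (3/4 - \<eta>)" using l_eq by simp
    also have "\<dots> \<le> (ln (real X)) powr 1" using eta lX by (intro powr_mono) auto
    also have "\<dots> = ln (real X)" using lX by simp
    finally show ?thesis .
  qed
  have s3: "s^3 = l" unfolding s_def using l1000 by (intro cube_root_facts) simp
  have s0: "s \<ge> 0" unfolding s_def by simp
  have s10: "s \<ge> 10" using ten_le_cube[OF s0] s3 l1000 by simp
  define u where "u = ln (real X) powr (1/3)"
  have u3: "u^3 = ln (real X)" unfolding u_def using lX by (intro cube_root_facts) simp
  have su: "s \<le> u" unfolding s_def u_def using l1000 lle by (intro powr_mono2) auto
  have u10: "u \<ge> 10" using s10 su by simp
  have "\<alpha> * exp (130 + 30 * s) \<le> 1"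
  proof -
    have "\<alpha> = exp (- l)" using l_eq a0 by simp
    hence "\<alpha> * exp (130 + 30 * s) = exp (130 + 30 * s - l)" by (simp add: exp_diff exp_minus field_simps)
    also have "\<dots> \<le> exp 0"
    proof -
      have "l \<ge> 100 * s" using cube_ge[OF s10] s3 by simp
      thus ?thesis using s10 by simp
    qed
    finally show ?thesis by simp
  qed
  moreover have "exp (135 + 31 * s) < real X"
  proof -
    have "ln (real X) \<ge> 100 * u" using cube_ge[OF u10] u3 by simp
    hence "135 + 31 * s < ln (real X)" using su u10 by linarith
    hence "exp (135 + 31 * s) < exp (ln (real X))" by simp
    thus ?thesis using X0 by simp
  qed
  ultimately show ?thesis using a0 s10 unfolding s_def l_def by blast
qed

lemma M_bound:
  fixes s :: real and N M :: nat
  assumes s0: "s \<ge> 0" and N: "N = nat \<lceil>2 * exp s\<rceil> + 12" and M: "M \<le> (2*N^3)^10"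
  shows "real M \<le> exp (130 + 30 * s)"
proof -
  define G where "G = exp s"
  have G1: "G \<ge> 1" unfolding G_def using s0 by simp
  have "(0::real) < 2 * exp s" by simp
  hence c0: "\<lceil>2 * exp s\<rceil> \<ge> 0" by linarith
  have "real (nat \<lceil>2 * exp s\<rceil>) = real_of_int \<lceil>2 * exp s\<rceil>" using c0 by simp
  moreover have "real_of_int \<lceil>2 * exp s\<rceil> \<le> 2 * exp s + 1" by linarith
  ultimately have "real N \<le> 2 * G + 13" unfolding N G_def by linarith
  also have "\<dots> \<le> 15 * G" using G1 by simp
  finally have NG: "real N \<le> 15 * G" .
  have "real M \<le> real ((2*N^3)^10)" using M by (simp only: of_nat_le_iff)
  also have "real ((2*N^3)^10) = (2 * real N ^ 3) ^ 10" by simp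
  also have "\<dots> \<le> (2 * (15 * G) ^ 3) ^ 10" using NG by (intro power_mono mult_left_mono) auto
  also have "(2 * (15 * G) ^ 3) = 6750 * G^3" by (simp add: power_mult_distrib)
  also have "(6750 * G^3) ^ 10 \<le> (2^13 * G^3) ^ 10" using G1 by (intro power_mono mult_right_mono) auto
  also have "(2^13 * G^3) ^ 10 = (2::real)^130 * (G ^ 30)"
  proof -
    have "(2^13 * G^3) ^ 10 = ((2::real)^13)^10 * (G^3)^10" by (rule power_mult_distrib)
    also have "\<dots> = 2^(13*10) * G^(3*10)" by (simp only: power_mult)
    finally show ?thesis by simp
  qed
  also have "\<dots> \<le> exp 130 * exp (30 * s)"
  proof (rule mult_mono)
    show "(2::real)^130 \<le> exp 130" using two_pow_le_exp[of 130] by simp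
    show "G ^ 30 \<le> exp (30 * s)" unfolding G_def using exp_of_nat_mult[of 30 s] by simp
  qed auto
  also have "\<dots> = exp (130 + 30 * s)" by (simp add: exp_add)
  finally show ?thesis .
qed




theorem proposition7p1:
  fixes \<eta> :: real
  assumes "\<eta> > 0"
  shows "\<exists>\<alpha>0 > 0. \<exists>X0::nat. \<forall>X::nat \<ge> X0. \<forall>\<alpha>::real.
           exp (- ((ln (real X)) powr (3/4 - \<eta>))) \<le> \<alpha> \<and> \<alpha> \<le> \<alpha>0 \<longrightarrow>
           (\<exists>f :: nat \<Rightarrow> real.
              (\<forall>x \<in> {1..X}. 0 \<le> f x \<and> f x \<le> 1) \<and>
              (\<Sum>x\<in>{1..X}. f x) / real X = \<alpha> \<and>
              (\<Sum>x\<in>{1..X}. \<Sum>y\<in>{1..X}. if square_diff x y then f x * f y else 0)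
                 \<le> \<alpha>^2 * real X powr (3/2) / 100 \<and>
              (\<forall>a d L. is_subprog X a d L \<and> prog_avg f a d L \<ge> 2 * \<alpha> \<longrightarrow>
                 real L < real X * exp (- ((ln (1 / \<alpha>)) powr (1/3)))))"
proof -
  define \<alpha>0 :: real where "\<alpha>0 = exp (-1000)"
  define X0 :: nat where "X0 = nat \<lceil>exp (1000::real)\<rceil>"
  have main: "\<exists>f :: nat \<Rightarrow> real.
              (\<forall>x \<in> {1..X}. 0 \<le> f x \<and> f x \<le> 1) \<and>
              (\<Sum>x\<in>{1..X}. f x) / real X = \<alpha> \<and>
              (\<Sum>x\<in>{1..X}. \<Sum>y\<in>{1..X}. if square_diff x y then f x * f y else 0)
                 \<le> \<alpha>^2 * real X powr (3/2) / 100 \<and>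
              (\<forall>a d L. is_subprog X a d L \<and> prog_avg f a d L \<ge> 2 * \<alpha> \<longrightarrow>
                 real L < real X * exp (- ((ln (1 / \<alpha>)) powr (1/3))))"
    if XX0: "X \<ge> X0" and lo: "exp (- ((ln (real X)) powr (3/4 - \<eta>))) \<le> \<alpha>" and hi: "\<alpha> \<le> \<alpha>0"
    for X :: nat and \<alpha> :: real
  proof -
    have Xe: "real X \<ge> exp 1000"
    proof -
      have "real X \<ge> real X0" using XX0 by simp
      moreover have "real X0 \<ge> exp 1000" unfolding X0_def by linarith
      ultimately show ?thesis by linarith
    qed
    define s where "s = ln (1/\<alpha>) powr (1/3)"
    have P: "\<alpha> > 0 \<and> s \<ge> 10 \<and> \<alpha> * exp (130 + 30 * s) \<le> 1 \<and> exp (135 + 31 * s) < real X"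
      unfolding s_def using params[OF assms Xe lo] hi unfolding \<alpha>0_def by blast
    have a0: "\<alpha> > 0" and s10: "s \<ge> 10" and R1: "\<alpha> * exp (130 + 30 * s) \<le> 1"
      and R2: "exp (135 + 31 * s) < real X" using P by auto
    define G where "G = exp s"
    have G1: "G \<ge> 1" unfolding G_def using s10 by simp
    define N where "N = nat \<lceil>2 * exp s\<rceil> + 12"
    have N12: "N \<ge> 12" unfolding N_def by simp
    have NG: "real N \<ge> 2 * G" unfolding N_def G_def by linarith
    obtain M A where M0: "0 < M" and Mle: "M \<le> (2*N^3)^10" and Asub: "A \<subseteq> {..<M}"
      and cA: "card A = 252" and cop: "\<forall>d. 1 \<le> d \<and> d \<le> N \<longrightarrow> coprime d M"
      and sqM: "\<forall>x y n. x mod M \<in> A \<longrightarrow> y mod M \<in> A \<longrightarrow> x = y + n^2 \<longrightarrow> M dvd n"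
      using construct[OF N12] by blast
    have MB: "real M \<le> exp (130 + 30 * s)" using M_bound[OF _ N_def Mle] s10 by simp
    have M1: "real M \<ge> 1" using M0 by simp
    have aM: "\<alpha> * real M \<le> 1" using MB R1 a0 by (meson mult_left_mono order_trans less_imp_le)
    have MGX: "20 * real M * G < real X"
    proof -
      have "20 * real M * G \<le> exp 5 * exp (130 + 30 * s) * exp s"
      proof (intro mult_mono)
        have "(20::real) \<le> 2^5" by simp
        also have "\<dots> \<le> exp 5" using two_pow_le_exp[of 5] by simp
        finally show "(20::real) \<le> exp 5" .
      qed (use MB G_def in auto)
      also have "\<dots> = exp (135 + 31 * s)" by (simp add: exp_add[symmetric])
      finally show ?thesis using R2 by linarith
    qed
    have X4M: "4 * real M \<le> real X" using MGX G1 M1 by (smt (verit) mult_le_cancel_left1 mult.commute mult.left_commute)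
    have X0': "real X > 0" using X4M M1 by linarith
    define S where "S = {x\<in>{1..X}. x mod M \<in> A}"
    define cS where "cS = real (card S)"
    have XdM: "real (X div M) \<ge> real X / real M - 1"
    proof -
      have "X < M * (X div M + 1)"
        using M0 by (metis add.commute div_mult_mod_eq mod_less_divisor mult.commute nat_add_left_cancel_less distrib_left mult_1_right)
      hence "real X < real M * (real (X div M) + 1)" by (metis of_nat_1 of_nat_add of_nat_less_iff of_nat_mult)
      thus ?thesis using M1 by (simp add: field_simps)
    qed
    have XdM1: "X div M \<ge> 1"
    proof -
      have "real X / real M \<ge> 4" using X4M M1 by (simp add: field_simps)
      hence "real (X div M) \<ge> 3" using XdM by linarith
      thus ?thesis by simp
    qed
    have cS_lb: "cS \<ge> 252 * (real X / real M - 2)"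
    proof -
      have "card A * (X div M - 1) \<le> card S" unfolding S_def by (rule S_count[OF M0 Asub])
      hence h1: "real (252 * (X div M - 1)) \<le> cS" unfolding cS_def cA by (simp only: of_nat_le_iff)
      have e: "real (252 * (X div M - 1)) = 252 * (real (X div M) - 1)" using XdM1 by (simp add: of_nat_diff)
      have h2: "252 * (real (X div M) - 1) \<le> cS" using h1 unfolding e .
      have "252 * (real X / real M - 2) \<le> 252 * (real (X div M) - 1)" using XdM by simp
      thus ?thesis using h2 by (smt (verit))
    qed
    have K1: "cS * real M \<ge> 126 * real X"
    proof -
      have "cS * real M \<ge> 252 * (real X / real M - 2) * real M" using cS_lb M1 by (intro mult_right_mono) auto
      also have "252 * (real X / real M - 2) * real M = 252 * (real X - 2 * real M)" using M1 by (simp add: field_simps)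
      finally show ?thesis using X4M by (smt (verit))
    qed
    have "cS \<noteq> 0"
    proof
      assume "cS = 0"
      with K1 X0' show False by simp
    qed
    hence cS0: "cS > 0" unfolding cS_def by simp
    have K2: "\<alpha> * real X \<le> cS"
    proof -
      have "\<alpha> * real X * real M \<le> 1 * real X" using aM X0' by (simp add: mult.commute mult.left_commute mult_right_mono)
      also have "\<dots> \<le> cS * real M / 126" using K1 by simp
      finally have "\<alpha> * real X * real M \<le> cS * real M / 126" .
      hence "\<alpha> * real X \<le> cS / 126" using M1 by (simp add: field_simps)
      thus ?thesis using cS0 by simp
    qed
    define t where "t = \<alpha> * real X / cS"
    have t0: "t \<ge> 0" unfolding t_def using a0 X0' cS0 by simp
    have t1: "t \<le> 1" unfolding t_def using K2 cS0 by simp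
    define f where "f x = (if x mod M \<in> A then t else 0)" for x
    have P1: "\<forall>x \<in> {1..X}. 0 \<le> f x \<and> f x \<le> 1" unfolding f_def using t0 t1 by simp
    have P2: "(\<Sum>x\<in>{1..X}. f x) / real X = \<alpha>"
    proof -
      have "(\<Sum>x\<in>{1..X}. f x) = t * cS" unfolding f_def cS_def S_def by (rule sum_if_const) simp
      also have "\<dots> = \<alpha> * real X" unfolding t_def using cS0 by simp
      finally show ?thesis using X0' by simp
    qed
    have P3: "(\<Sum>x\<in>{1..X}. \<Sum>y\<in>{1..X}. if square_diff x y then f x * f y else 0)
                 \<le> \<alpha>^2 * real X powr (3/2) / 100"
    proof -
      define T where "T = {p\<in>{1..X} \<times> {1..X}. square_diff (fst p) (snd p) \<and> fst p mod M \<in> A \<and> snd p mod M \<in> A}"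
      define K where "K = nat \<lfloor>sqrt (real X) / real M\<rfloor>"
      have "(\<Sum>x\<in>{1..X}. \<Sum>y\<in>{1..X}. if square_diff x y then f x * f y else 0)
            = (\<Sum>p\<in>{1..X} \<times> {1..X}. if square_diff (fst p) (snd p) then f (fst p) * f (snd p) else 0)"
        by (simp add: sum.cartesian_product case_prod_beta)
      also have "\<dots> = (\<Sum>p\<in>{1..X} \<times> {1..X}. if square_diff (fst p) (snd p) \<and> fst p mod M \<in> A \<and> snd p mod M \<in> A then t^2 else 0)"
        by (intro sum.cong) (auto simp: f_def power2_eq_square)
      also have "\<dots> = t^2 * real (card T)" unfolding T_def by (rule sum_if_const) simp
      also have "\<dots> \<le> t^2 * (cS * real K)"
      proof -
        have "card T \<le> card S * K" unfolding T_def S_def K_def by (rule sq_count[OF M0 sqM])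
        hence "real (card T) \<le> cS * real K" unfolding cS_def by (metis of_nat_le_iff of_nat_mult)
        thus ?thesis by (intro mult_left_mono) auto
      qed
      also have "\<dots> \<le> t^2 * (cS * (sqrt (real X) / real M))"
      proof -
        have "sqrt (real X) / real M \<ge> 0" by simp
        hence "real K \<le> sqrt (real X) / real M" unfolding K_def by linarith
        thus ?thesis using cS0 by (intro mult_left_mono) auto
      qed
      also have "\<dots> = \<alpha>^2 * real X^2 * sqrt (real X) / (cS * real M)"
        unfolding t_def using cS0 M1 by (simp add: field_simps power2_eq_square)
      also have "\<dots> \<le> \<alpha>^2 * real X^2 * sqrt (real X) / (100 * real X)"
      proof (rule divide_left_mono)
        show "100 * real X \<le> cS * real M" using K1 X0' by linarith
      qed (use X0' cS0 M1 in auto)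
      also have "\<dots> = \<alpha>^2 * (real X * sqrt (real X)) / 100" using X0' by (simp add: field_simps power2_eq_square)
      also have "real X * sqrt (real X) = real X powr (3/2)"
      proof -
        have "real X powr (3/2) = real X powr (1 + 1/2)" by simp
        also have "\<dots> = real X powr 1 * real X powr (1/2)" using X0' by (simp only: powr_add)
        also have "\<dots> = real X * sqrt (real X)" using X0' by (simp add: powr_half_sqrt)
        finally show ?thesis by simp
      qed
      finally show ?thesis by simp
    qed
    have P4: "real L < real X * exp (- ((ln (1 / \<alpha>)) powr (1/3)))"
      if sp: "is_subprog X a d L" and av: "prog_avg f a d L \<ge> 2 * \<alpha>" for a d L
    proof -
      have a1: "1 \<le> a" and d1: "1 \<le> d" and L1: "1 \<le> L" and last: "a + d * (L - 1) \<le> X"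
        using sp unfolding is_subprog_def by auto
      have rhs: "real X * exp (- ((ln (1 / \<alpha>)) powr (1/3))) = real X / G"
        unfolding G_def s_def by (simp add: exp_minus field_simps)
      show ?thesis unfolding rhs
      proof (rule ccontr)
        assume "\<not> real L < real X / G"
        hence LG: "real L * G \<ge> real X" using G1 by (simp add: field_simps)
        show False
        proof (cases "d \<le> N")
          case True
          hence cdM: "coprime d M" using cop d1 by blast
          define c where "c = card {j\<in>{..<L}. (a + d*j) mod M \<in> A}"
          have c_ub: "real c \<le> 252 * (real L / real M + 1)"
          proof -
            have "c \<le> card A * (L div M + 1)" unfolding c_def by (rule ap_count[OF M0 cdM Asub])
            hence "real c \<le> 252 * (real (L div M) + 1)" using cA by (metis of_nat_le_iff of_nat_mult of_nat_add of_nat_1 of_nat_numeral)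
            moreover have "real (L div M) \<le> real L / real M"
            proof -
              have "(L div M) * M \<le> L" by simp
              hence "real (L div M) * real M \<le> real L" by (metis of_nat_le_iff of_nat_mult)
              thus ?thesis using M1 by (simp add: field_simps)
            qed
            ultimately show ?thesis by (smt (verit))
          qed
          have pa: "prog_avg f a d L * real L = t * real c"
          proof -
            have "(\<Sum>j<L. f (a + d * j)) = t * real c" unfolding f_def c_def by (rule sum_if_const) simp
            thus ?thesis unfolding prog_avg_def using L1 by simp
          qed
          have s1: "2 * \<alpha> * real L \<le> t * real c"
            using mult_right_mono[OF av, of "real L"] pa by simp
          have "2 * \<alpha> * real L * cS \<le> t * real c * cS"
            using mult_right_mono[OF s1, of cS] cS0 by simp
          also have "t * real c * cS = \<alpha> * (real X * real c)" unfolding t_def using cS0 by simp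
          finally have "\<alpha> * (2 * real L * cS) \<le> \<alpha> * (real X * real c)" by (simp add: mult_ac)
          hence s2: "2 * real L * cS \<le> real X * real c" using a0 by simp
          have "2 * real L * (252 * (real X / real M - 2)) \<le> 2 * real L * cS"
            using cS_lb by (intro mult_left_mono) auto
          also have "\<dots> \<le> real X * real c" by (rule s2)
          also have "\<dots> \<le> real X * (252 * (real L / real M + 1))" using c_ub by (intro mult_left_mono) auto
          finally have s3: "2 * real L * (252 * (real X / real M - 2)) \<le> real X * (252 * (real L / real M + 1))" .
          have e1: "real M * (2 * real L * (252 * (real X / real M - 2))) = 252 * (2 * real L * (real X - 2 * real M))"
            using M1 by (simp add: field_simps)
          have e2: "real M * (real X * (252 * (real L / real M + 1))) = 252 * (real X * (real L + real M))"
            using M1 by (simp add: field_simps)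
          have "252 * (2 * real L * (real X - 2 * real M)) \<le> 252 * (real X * (real L + real M))"
            using mult_left_mono[OF s3, of "real M"] M1 unfolding e1 e2 by simp
          hence "2 * real L * (real X - 2 * real M) \<le> real X * (real L + real M)" by simp
          hence A: "real X * real L \<le> real X * real M + 4 * (real L * real M)" by (simp add: algebra_simps)
          have "real X * real X \<le> real X * (real L * G)" using LG X0' by (intro mult_left_mono) auto
          also have "\<dots> = (real X * real L) * G" by (simp add: mult_ac)
          also have "\<dots> \<le> (real X * real M + 4 * (real L * real M)) * G" using A G1 by (intro mult_right_mono) auto
          also have "\<dots> \<le> (real X * real M + 4 * (real X * real M)) * G"
          proof -
            have "L - 1 \<le> d * (L - 1)" using d1 by simp
            hence "L \<le> X" using last a1 L1 by linarith
            hence "real L \<le> real X" by simp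
            hence "real L * real M \<le> real X * real M" using M1 by (intro mult_right_mono) auto
            thus ?thesis using G1 by (intro mult_right_mono) (auto simp: mult_ac)
          qed
          also have "\<dots> = real X * (5 * real M * G)" by (simp add: algebra_simps)
          finally have "real X * real X \<le> real X * (5 * real M * G)" .
          hence "real X \<le> 5 * real M * G" using X0' by simp
          hence "real X \<le> 5 * (real M * G)" by (simp add: mult.assoc)
          moreover have "real M * G \<ge> 0" using M1 G1 by simp
          moreover have "20 * (real M * G) < real X" using MGX by (simp add: mult.assoc)
          ultimately show False by linarith
        next
          case False
          hence dN: "real d \<ge> 2 * G" using NG by simp
          have "real d * (real L - 1) \<le> real X"
          proof -
            have "d * (L - 1) \<le> X" using last by simp
            hence "real (d * (L - 1)) \<le> real X" by (simp only: of_nat_le_iff)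
            thus ?thesis using L1 by (simp add: of_nat_diff)
          qed
          moreover have "2 * G * (real L - 1) \<le> real d * (real L - 1)" using dN L1 by (intro mult_right_mono) auto
          ultimately have "2 * G * (real L - 1) \<le> real X" by (meson order_trans)
          hence "2 * (real L * G) - 2 * G \<le> real X" by (simp add: algebra_simps)
          hence XG: "real X \<le> 2 * G" using LG by linarith
          have "G \<le> real M * G" using M1 G1 by simp
          moreover have "20 * (real M * G) < real X" using MGX by (simp add: mult.assoc)
          ultimately show False using XG G1 by linarith
        qed
      qed
    qed
    show ?thesis using P1 P2 P3 P4 by blast
  qed
  show ?thesis
    using main by (intro exI[of _ \<alpha>0] conjI exI[of _ X0] allI impI) (auto simp: \<alpha>0_def)
qed


end
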